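(* For every integer $n\ge0$ let $\mathcal Q_n$ be the complex vector space of polynomials $q(\xi_1,\ldots,\xi_n|\eta_1,\ldots,\eta_n)$ that are homogeneous of weighted degree $n$ (the variables $\xi_i,\eta_i$ having weight $i$) such that the polynomials $$Q_{N,M}(X|Z)=q\bigl(S_1(X),\ldots,S_n(X)\,\big|\,S_1(Z),\ldots,S_n(Z)\bigr),\qquad X=(x_1,\ldots,x_N),\ Z=(z_1,\ldots,z_M),$$ where $S_r$ denotes the $r$-th power sum, satisfy for all integers $N,M\ge0$ the chain equation $$Q_{N+2,M+1}(X,x,-x\,|\,Z,ix)=Q_{N,M}(X|Z)$$ identically in all variables. Then $$\sum_{n=0}^\infty q^n\dim\mathcal Q_n=\prod_{k=1}^\infty\frac1{1-q^k}.$$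
   Context: Such polynomials $Q_{N,M}$ are automatically symmetric in $X$ and in $Z$ separately; they parametrize (in the kink sector of the sine-Gordon model) form factors of chiral descendant operators. *)

theory Defs
  imports "HOL-Analysis.Analysis" "HOL-Library.Function_Algebras" "HOL-Library.Multiset"
begin

text \<open>A monomial in the variables xi_1, xi_2, ... and eta_1, eta_2, ... is encoded by a pair
 of multisets of positive integers (lam, mu): it is the product of xi_i over i in lam times
 the product of eta_j over j in mu.  The weighted-homogeneous monomials of degree n automatically only
 involve xi_1..xi_n, eta_1..eta_n.\<close>

definition wmonos :: "nat \<Rightarrow> (nat multiset \<times> nat multiset) set" where
  "wmonos n = {(lam, mu). 0 \<notin># lam \<and> 0 \<notin># mu \<and> sum_mset lam + sum_mset mu = n}"

text \<open>A polynomial q in Q_n-ambient space is given by its coefficient function c,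
 supported on wmonos n.\<close>

definition power_sum :: "nat \<Rightarrow> complex list \<Rightarrow> complex" where
  "power_sum r X = sum_list (map (\<lambda>x. x ^ r) X)"

definition evalQ :: "nat \<Rightarrow> (nat multiset \<times> nat multiset \<Rightarrow> complex)
    \<Rightarrow> complex list \<Rightarrow> complex list \<Rightarrow> complex" where
  "evalQ n c X Z = (\<Sum>p\<in>wmonos n. c p *
      (\<Prod>i\<in>#fst p. power_sum i X) * (\<Prod>j\<in>#snd p. power_sum j Z))"

definition Qspace :: "nat \<Rightarrow> (nat multiset \<times> nat multiset \<Rightarrow> complex) set" where
  "Qspace n = {c. (\<forall>p. p \<notin> wmonos n \<longrightarrow> c p = 0) \<and>
      (\<forall>X Z x. evalQ n c (X @ [x, - x]) (Z @ [\<i> * x]) = evalQ n c X Z)}"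

definition dimQ :: "nat \<Rightarrow> nat" where
  "dimQ n = vector_space.dim (\<lambda>(a::complex) f. (\<lambda>p. a * f p)) (Qspace n)"

end

theory Submission
  imports Defs
begin


lemma prod_split_v:
  fixes f :: "'v \<Rightarrow> complex"
  shows "(\<Prod>x\<in>#m. (f(v:=t)) x) = t ^ count m v * (\<Prod>x\<in>#{#x\<in>#m. x \<noteq> v#}. f x)"
proof -
  have "(\<Prod>x\<in>#m. (f(v:=t)) x) = (\<Prod>x\<in>#{#x\<in>#m. x = v#}. (f(v:=t)) x) * (\<Prod>x\<in>#{#x\<in>#m. x \<noteq> v#}. (f(v:=t)) x)"
  proof -
    have eq: "image_mset (f(v:=t)) m = image_mset (f(v:=t)) {#x\<in>#m. x = v#} + image_mset (f(v:=t)) {#x\<in>#m. x \<noteq> v#}"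
      by (metis image_mset_union multiset_partition)
    show ?thesis by (simp only: eq prod_mset.union)
  qed
  also have "(\<Prod>x\<in>#{#x\<in>#m. x = v#}. (f(v:=t)) x) = t ^ count m v"
    by (simp add: filter_eq_replicate_mset)
  also have "(\<Prod>x\<in>#{#x\<in>#m. x \<noteq> v#}. (f(v:=t)) x) = (\<Prod>x\<in>#{#x\<in>#m. x \<noteq> v#}. f x)"
    by (intro arg_cong[where f=prod_mset] image_mset_cong) auto
  finally show ?thesis .
qed

lemma poly_id_gen:
  fixes c :: "'v multiset \<Rightarrow> complex"
  assumes "finite V" "finite W" "\<forall>m\<in>W. set_mset m \<subseteq> V"
    and "\<forall>f. (\<Sum>m\<in>W. c m * (\<Prod>x\<in>#m. f x)) = 0"
  shows "\<forall>m\<in>W. c m = 0"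
  using assms
proof (induction V arbitrary: W c rule: finite_induct)
  case empty
  then have sub: "W \<subseteq> {{#}}" by auto
  show ?case
  proof (cases "W = {}")
    case False with sub have "W = {{#}}" by auto
    with empty.prems(3) show ?thesis by simp
  qed simp
next
  case (insert v V W c)
  define K where "K = Max ((\<lambda>m. count m v) ` W)"
  have cK: "m \<in> W \<Longrightarrow> count m v \<le> K" for m
    unfolding K_def using insert.prems(1) by auto
  define G where "G i f = (\<Sum>m\<in>{m\<in>W. count m v = i}. c m * (\<Prod>x\<in>#{#x\<in>#m. x \<noteq> v#}. f x))" for i and f :: "'v \<Rightarrow> complex"
  have G0: "G i f = 0" for i f
  proof (cases "i \<le> K")
    case True
    have "\<forall>t. (\<Sum>i\<le>K. G i f * t ^ i) = 0"
    proof
      fix t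
      have "0 = (\<Sum>m\<in>W. c m * (\<Prod>x\<in>#m. (f(v:=t)) x))" using spec[OF insert.prems(3), of "f(v:=t)"] by (rule sym)
      also have "\<dots> = (\<Sum>m\<in>W. c m * (t ^ count m v * (\<Prod>x\<in>#{#x\<in>#m. x \<noteq> v#}. f x)))"
        by (rule sum.cong[OF refl], subst prod_split_v, rule refl)
      also have "\<dots> = (\<Sum>i\<le>K. \<Sum>m\<in>{m\<in>W. count m v = i}. c m * (t ^ count m v * (\<Prod>x\<in>#{#x\<in>#m. x \<noteq> v#}. f x)))"
      proof -
        have im: "(\<lambda>m. count m v) ` W \<subseteq> {..K}" using cK by auto
        show ?thesis by (rule sum.group[OF insert.prems(1) finite_atMost im, symmetric])
      qed
      also have "\<dots> = (\<Sum>i\<le>K. G i f * t ^ i)"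
        unfolding G_def sum_distrib_right by (intro sum.cong refl) (auto simp: mult_ac)
      finally show "(\<Sum>i\<le>K. G i f * t ^ i) = 0" by simp
    qed
    then show ?thesis using True by (simp only: polyfun_eq_0)
  next
    case False
    then have e: "{m\<in>W. count m v = i} = {}" using cK by fastforce
    show ?thesis unfolding G_def by (simp only: e sum.empty)
  qed
  show ?case
  proof
    fix m assume mW: "m \<in> W"
    define i where "i = count m v"
    define Wi where "Wi = (\<lambda>m. {#x\<in>#m. x \<noteq> v#}) ` {m\<in>W. count m v = i}"
    define ci where "ci m' = c (m' + replicate_mset i v)" for m'
    have rec: "m' \<in> {m\<in>W. count m v = i} \<Longrightarrow> {#x\<in>#m'. x \<noteq> v#} + replicate_mset i v = m'" for m'
    proof -
      assume a: "m' \<in> {m\<in>W. count m v = i}"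
      have "m' = {#x\<in>#m'. x \<noteq> v#} + {#x\<in>#m'. \<not> x \<noteq> v#}" by (rule multiset_partition)
      also have "{#x\<in>#m'. \<not> x \<noteq> v#} = replicate_mset i v" using a by (simp add: filter_eq_replicate_mset)
      finally show ?thesis by (rule sym)
    qed
    have inj: "inj_on (\<lambda>m. {#x\<in>#m. x \<noteq> v#}) {m\<in>W. count m v = i}"
    proof (rule inj_onI)
      fix x y assume xin: "x \<in> {m\<in>W. count m v = i}" and yin: "y \<in> {m\<in>W. count m v = i}" and eq: "{#z\<in>#x. z \<noteq> v#} = {#z\<in>#y. z \<noteq> v#}"
      have "x = {#z\<in>#x. z \<noteq> v#} + replicate_mset i v" using rec[OF xin] by (rule sym)
      also have "\<dots> = {#z\<in>#y. z \<noteq> v#} + replicate_mset i v" using eq by (rule arg_cong)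
      also have "\<dots> = y" by (rule rec[OF yin])
      finally show "x = y" .
    qed
    have "\<forall>m'\<in>Wi. ci m' = 0"
    proof (rule insert.IH)
      show "finite Wi" unfolding Wi_def using insert.prems(1) by auto
      show "\<forall>m\<in>Wi. set_mset m \<subseteq> V" unfolding Wi_def using insert.prems(2) by auto
      show "\<forall>f. (\<Sum>m\<in>Wi. ci m * (\<Prod>x\<in>#m. f x)) = 0"
      proof
        fix f :: "'v \<Rightarrow> complex"
        have "(\<Sum>m\<in>Wi. ci m * (\<Prod>x\<in>#m. f x)) = (\<Sum>m\<in>{m\<in>W. count m v = i}. ci {#x\<in>#m. x \<noteq> v#} * (\<Prod>x\<in>#{#x\<in>#m. x \<noteq> v#}. f x))"
          unfolding Wi_def by (rule sum.reindex[OF inj, unfolded comp_def])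
        also have "\<dots> = G i f" unfolding G_def ci_def by (intro sum.cong refl) (simp add: rec)
        finally show "(\<Sum>m\<in>Wi. ci m * (\<Prod>x\<in>#m. f x)) = 0" using G0 by simp
      qed
    qed
    moreover have "{#x\<in>#m. x \<noteq> v#} \<in> Wi" unfolding Wi_def i_def using mW by auto
    ultimately have "ci {#x\<in>#m. x \<noteq> v#} = 0" by blast
    then show "c m = 0" unfolding ci_def using rec[of m] mW i_def by simp
  qed
qed



lemma poly_id_pair:
  fixes c :: "nat multiset \<times> nat multiset \<Rightarrow> complex"
  assumes fin: "finite W" and z: "\<forall>a b. (\<Sum>p\<in>W. c p * (\<Prod>i\<in>#fst p. a i) * (\<Prod>j\<in>#snd p. b j)) = 0"
  shows "\<forall>p\<in>W. c p = 0"
proof -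
  define enc where "enc p = image_mset Inl (fst p) + image_mset Inr (snd p)" for p :: "nat multiset \<times> nat multiset"
  define dec where "dec m = (image_mset projl (filter_mset isl m), image_mset projr (filter_mset (\<lambda>x. \<not> isl x) m))"
    for m :: "(nat+nat) multiset"
  have de: "dec (enc p) = p" for p
    by (cases p) (simp add: dec_def enc_def filter_mset_image_mset image_mset.compositionality comp_def)
  have inj: "inj_on enc W" by (metis de inj_onI)
  have pe: "(\<Prod>x\<in>#enc p. case_sum a b x) = (\<Prod>i\<in>#fst p. a i) * (\<Prod>j\<in>#snd p. b j)" for a b p
    by (simp add: enc_def image_mset.compositionality comp_def)
  have "\<forall>m\<in>enc ` W. (c \<circ> dec) m = 0"
  proof (rule poly_id_gen)
    show "finite (\<Union>m\<in>enc ` W. set_mset m)" using fin by auto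
    show "finite (enc ` W)" using fin by auto
    show "\<forall>m\<in>enc ` W. set_mset m \<subseteq> (\<Union>m\<in>enc ` W. set_mset m)" by auto
    show "\<forall>f. (\<Sum>m\<in>enc ` W. (c \<circ> dec) m * (\<Prod>x\<in>#m. f x)) = 0"
    proof
      fix f :: "nat + nat \<Rightarrow> complex"
      have ff: "f = case_sum (\<lambda>i. f (Inl i)) (\<lambda>j. f (Inr j))"
        by (rule ext) (simp split: sum.split)
      have "(\<Sum>m\<in>enc ` W. (c \<circ> dec) m * (\<Prod>x\<in>#m. f x)) = (\<Sum>p\<in>W. c p * (\<Prod>x\<in>#enc p. f x))"
        by (subst sum.reindex[OF inj]) (simp add: de)
      also have "\<dots> = (\<Sum>p\<in>W. c p * ((\<Prod>i\<in>#fst p. f (Inl i)) * (\<Prod>j\<in>#snd p. f (Inr j))))"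
        by (subst ff) (simp only: pe)
      also have "\<dots> = 0" using z by (simp add: mult.assoc)
      finally show "(\<Sum>m\<in>enc ` W. (c \<circ> dec) m * (\<Prod>x\<in>#m. f x)) = 0" .
    qed
  qed
  then show ?thesis by (simp add: de)
qed

lemma ps_Nil[simp]: "power_sum r [] = 0" by (simp add: power_sum_def)
lemma ps_Cons[simp]: "power_sum r (x # X) = x ^ r + power_sum r X" by (simp add: power_sum_def)
lemma ps_append[simp]: "power_sum r (X @ Y) = power_sum r X + power_sum r Y" by (simp add: power_sum_def)

lemma ps_block:
  assumes m: "m > 0" and s: "s > 0"
  shows "power_sum s (map (\<lambda>j. t * exp (2 * of_real pi * \<i> / of_nat m) ^ j) [0..<m]) =
     (if m dvd s then of_nat m * t ^ s else 0)"
proof -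
  define w where "w = exp (2 * of_real pi * \<i> / of_nat m)"
  have ws: "w ^ s = exp (2 * of_real pi * \<i> * of_nat s / of_nat m)"
    unfolding w_def by (simp flip: exp_of_nat_mult add: field_simps)
  have "power_sum s (map (\<lambda>j. t * w ^ j) [0..<m]) = (\<Sum>j<m. t ^ s * (w ^ s) ^ j)"
    unfolding power_sum_def by (simp add: sum_list_sum_nth lessThan_atLeast0 power_mult_distrib flip: power_mult) (simp add: mult.commute)
  also have "\<dots> = t ^ s * (\<Sum>j<m. (w ^ s) ^ j)" by (simp add: sum_distrib_left)
  also have "\<dots> = (if m dvd s then of_nat m * t ^ s else 0)"
  proof (cases "m dvd s")
    case True
    then have "w ^ s = 1" unfolding ws using complex_root_unity_eq_1[of m s] m by simp
    then show ?thesis using True by simp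
  next
    case False
    then have ne: "w ^ s \<noteq> 1" unfolding ws using complex_root_unity_eq_1[of m s] m by simp
    have "(w ^ s) ^ m = 1"
    proof -
      have "(w ^ s) ^ m = (w ^ m) ^ s" by (simp flip: power_mult add: mult.commute)
      also have "w ^ m = 1" unfolding w_def using m
        by (simp flip: exp_of_nat_mult)
      finally show ?thesis by simp
    qed
    then have "(\<Sum>j<m. (w ^ s) ^ j) = 0" using ne by (simp add: geometric_sum)
    then show ?thesis using False by simp
  qed
  finally show ?thesis unfolding w_def .
qed

lemma ex_root: "m > 0 \<Longrightarrow> \<exists>t::complex. t ^ m = d"
proof (cases "d = 0")
  case True assume "m > 0" then show ?thesis using True by (intro exI[of _ 0]) simp
next
  case False assume m: "m > 0"
  have "exp (Ln d / of_nat m) ^ m = exp (of_nat m * (Ln d / of_nat m))" by (simp flip: exp_of_nat_mult)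
  also have "\<dots> = d" using m False by simp
  finally show ?thesis by blast
qed

lemma ps_surj: "\<exists>xs. \<forall>r\<in>{1..n}. power_sum r xs = v r"
proof (induction n)
  case 0 then show ?case by simp
next
  case (Suc n)
  then obtain xs where xs: "\<forall>r\<in>{1..n}. power_sum r xs = v r" by blast
  obtain t where t: "t ^ Suc n = (v (Suc n) - power_sum (Suc n) xs) / of_nat (Suc n)"
    using ex_root[of "Suc n"] by blast
  define ys where "ys = xs @ map (\<lambda>j. t * exp (2 * of_real pi * \<i> / of_nat (Suc n)) ^ j) [0..<Suc n]"
  have "power_sum r ys = v r" if r: "r \<in> {1..Suc n}" for r
  proof (cases "r = Suc n")
    case True
    then show ?thesis unfolding ys_def using ps_block[of "Suc n" r t] t
      by (simp del: of_nat_Suc)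
  next
    case False
    then have "\<not> Suc n dvd r" using r by (auto dest: dvd_imp_le)
    then show ?thesis unfolding ys_def using ps_block[of "Suc n" r t] xs r False by auto
  qed
  then show ?case by blast
qed



definition Fv :: "nat \<Rightarrow> (nat multiset \<times> nat multiset \<Rightarrow> complex) \<Rightarrow> (nat \<Rightarrow> complex) \<Rightarrow> (nat \<Rightarrow> complex) \<Rightarrow> complex" where
  "Fv n c a b = (\<Sum>p\<in>wmonos n. c p * (\<Prod>i\<in>#fst p. a i) * (\<Prod>j\<in>#snd p. b j))"

definition pure :: "nat multiset \<times> nat multiset \<Rightarrow> bool" where
  "pure p \<longleftrightarrow> (\<forall>i\<in>#fst p. odd i) \<and> (\<forall>j\<in>#snd p. even j)"

lemma evalQ_Fv: "evalQ n c X Z = Fv n c (\<lambda>i. power_sum i X) (\<lambda>j. power_sum j Z)"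
  by (simp add: evalQ_def Fv_def)

lemma mem_le_sum_mset: "(i::nat) \<in># M \<Longrightarrow> i \<le> sum_mset M"
  by (induction M) auto

lemma size_le_sum_mset: "0 \<notin># (M::nat multiset) \<Longrightarrow> size M \<le> sum_mset M"
proof (induction M)
  case (add x M) then show ?case by (cases x) auto
qed simp

lemma wmonos_mem1: "p \<in> wmonos n \<Longrightarrow> i \<in># fst p \<Longrightarrow> i \<in> {1..n}"
proof -
  assume p: "p \<in> wmonos n" and i: "i \<in># fst p"
  have "0 \<notin># fst p" "sum_mset (fst p) + sum_mset (snd p) = n" using p by (cases p, simp add: wmonos_def)+
  then show ?thesis using i mem_le_sum_mset[OF i] by (cases i) auto
qed

lemma wmonos_mem2: "p \<in> wmonos n \<Longrightarrow> i \<in># snd p \<Longrightarrow> i \<in> {1..n}"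
proof -
  assume p: "p \<in> wmonos n" and i: "i \<in># snd p"
  have "0 \<notin># snd p" "sum_mset (fst p) + sum_mset (snd p) = n" using p by (cases p, simp add: wmonos_def)+
  then show ?thesis using i mem_le_sum_mset[OF i] by (cases i) auto
qed

lemma finite_wmonos: "finite (wmonos n)"
proof -
  define B where "B = (\<Union>k\<le>n. multisets_of_size {1..n} k)"
  have fB: "finite B" unfolding B_def by auto
  have "wmonos n \<subseteq> B \<times> B"
  proof
    fix p assume p: "p \<in> wmonos n"
    obtain l m where pe: "p = (l, m)" by (cases p)
    have "set_mset l \<subseteq> {1..n}" "set_mset m \<subseteq> {1..n}"
      using wmonos_mem1[OF p] wmonos_mem2[OF p] pe by auto
    moreover have "size l \<le> n" "size m \<le> n"
      using p pe size_le_sum_mset[of l] size_le_sum_mset[of m] unfolding wmonos_def by auto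
    ultimately show "p \<in> B \<times> B" using pe unfolding B_def multisets_of_size_def by auto
  qed
  then show ?thesis using fB by (meson finite_SigmaI finite_subset)
qed

lemma Fv_cong:
  assumes "\<forall>i\<in>{1..n}. a i = a' i" "\<forall>i\<in>{1..n}. b i = b' i"
  shows "Fv n c a b = Fv n c a' b'"
  unfolding Fv_def
proof (intro sum.cong refl)
  fix p assume p: "p \<in> wmonos n"
  have "(\<Prod>i\<in>#fst p. a i) = (\<Prod>i\<in>#fst p. a' i)"
    by (intro arg_cong[where f=prod_mset] image_mset_cong) (use assms wmonos_mem1[OF p] in auto)
  moreover have "(\<Prod>i\<in>#snd p. b i) = (\<Prod>i\<in>#snd p. b' i)"
    by (intro arg_cong[where f=prod_mset] image_mset_cong) (use assms wmonos_mem2[OF p] in auto)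
  ultimately show "c p * (\<Prod>i\<in>#fst p. a i) * (\<Prod>j\<in>#snd p. b j) = c p * (\<Prod>i\<in>#fst p. a' i) * (\<Prod>j\<in>#snd p. b' j)"
    by simp
qed

lemma Q_iter:
  assumes "c \<in> Qspace n"
  shows "evalQ n c (X @ concat (map (\<lambda>x. [x, - x]) xs)) (Z @ map (\<lambda>x. \<i> * x) xs) = evalQ n c X Z"
proof (induction xs arbitrary: X Z)
  case Nil then show ?case by simp
next
  case (Cons x xs)
  have "evalQ n c (X @ concat (map (\<lambda>x. [x, - x]) (x # xs))) (Z @ map (\<lambda>x. \<i> * x) (x # xs))
      = evalQ n c ((X @ [x, -x]) @ concat (map (\<lambda>x. [x, - x]) xs)) ((Z @ [\<i> * x]) @ map (\<lambda>x. \<i> * x) xs)"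
    by simp
  also have "\<dots> = evalQ n c (X @ [x, -x]) (Z @ [\<i> * x])" by (rule Cons.IH)
  also have "\<dots> = evalQ n c X Z" using assms unfolding Qspace_def by blast
  finally show ?case .
qed

lemma ps_pairs: "power_sum r (concat (map (\<lambda>x. [x, - x]) xs)) = (1 + (-1) ^ r) * power_sum r xs"
proof (induction xs)
  case (Cons x xs)
  have "power_sum r (concat (map (\<lambda>x. [x, - x]) (x # xs))) = x ^ r + (-1) ^ r * x ^ r + power_sum r (concat (map (\<lambda>x. [x, - x]) xs))"
    by (simp add: power_minus[of x])
  also have "\<dots> = (1 + (-1) ^ r) * power_sum r (x # xs)" using Cons by (simp add: ring_distribs)
  finally show ?case .
qed simp

lemma ps_imap: "power_sum r (map (\<lambda>x. \<i> * x) xs) = \<i> ^ r * power_sum r xs"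
  by (induction xs) (auto simp: power_mult_distrib algebra_simps)

lemma key:
  assumes cQ: "c \<in> Qspace n" and pz: "\<forall>p\<in>wmonos n. pure p \<longrightarrow> c p = 0"
  shows "c p = 0"
proof -
  have F0: "Fv n c a b = 0" for a b
  proof -
    obtain X where X: "\<forall>r\<in>{1..n}. power_sum r X = a r" using ps_surj by blast
    obtain Z where Z: "\<forall>r\<in>{1..n}. power_sum r Z = b r" using ps_surj by blast
    define t where "t r = (if odd r then - b r / \<i> ^ r else - a r / 2)" for r
    obtain xs where xs: "\<forall>r\<in>{1..n}. power_sum r xs = t r" using ps_surj by blast
    define X' where "X' = X @ concat (map (\<lambda>x. [x, - x]) xs)"
    define Z' where "Z' = Z @ map (\<lambda>x. \<i> * x) xs"
    have "Fv n c a b = evalQ n c X Z" unfolding evalQ_Fv by (rule Fv_cong) (use X Z in auto)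
    also have "\<dots> = evalQ n c X' Z'" unfolding X'_def Z'_def using Q_iter[OF cQ] by simp
    also have "\<dots> = Fv n c (\<lambda>i. power_sum i X') (\<lambda>j. power_sum j Z')" by (rule evalQ_Fv)
    also have "\<dots> = 0" unfolding Fv_def
    proof (intro sum.neutral ballI)
      fix p assume p: "p \<in> wmonos n"
      show "c p * (\<Prod>i\<in>#fst p. power_sum i X') * (\<Prod>j\<in>#snd p. power_sum j Z') = 0"
      proof (cases "pure p")
        case True then show ?thesis using pz p by simp
      next
        case False
        then consider i where "i \<in># fst p" "even i" | j where "j \<in># snd p" "odd j"
          unfolding pure_def by blast
        then show ?thesis
        proof cases
          case (1 i)
          have "i \<in> {1..n}" using wmonos_mem1[OF p 1(1)] .
          then have "power_sum i X' = 0" unfolding X'_def using X xs 1(2) by (simp add: ps_pairs t_def)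
          then have "(\<Prod>i\<in>#fst p. power_sum i X') = 0" using 1(1) by force
          then show ?thesis by simp
        next
          case (2 j)
          have "j \<in> {1..n}" using wmonos_mem2[OF p 2(1)] .
          then have "power_sum j Z' = 0" unfolding Z'_def using Z xs 2(2) by (simp add: ps_imap t_def)
          then have "(\<Prod>j\<in>#snd p. power_sum j Z') = 0" using 2(1) by force
          then show ?thesis by simp
        qed
      qed
    qed
    finally show ?thesis .
  qed
  have "\<forall>p\<in>wmonos n. c p = 0"
    by (rule poly_id_pair[OF finite_wmonos]) (use F0 in \<open>simp add: Fv_def\<close>)
  then show ?thesis using cQ unfolding Qspace_def by blast
qed



definition mulA :: "nat \<Rightarrow> (nat multiset \<times> nat multiset \<Rightarrow> complex) \<Rightarrow> (nat multiset \<times> nat multiset \<Rightarrow> complex)" where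
  "mulA r c = (\<lambda>p. if r \<in># fst p then c (fst p - {#r#}, snd p) else 0)"
definition mulB :: "nat \<Rightarrow> (nat multiset \<times> nat multiset \<Rightarrow> complex) \<Rightarrow> (nat multiset \<times> nat multiset \<Rightarrow> complex)" where
  "mulB r c = (\<lambda>p. if r \<in># snd p then c (fst p, snd p - {#r#}) else 0)"

definition supp :: "nat \<Rightarrow> (nat multiset \<times> nat multiset \<Rightarrow> complex) \<Rightarrow> bool" where
  "supp d c \<longleftrightarrow> (\<forall>p. p \<notin> wmonos d \<longrightarrow> c p = 0)"

lemma wmonos_iff: "(l, m) \<in> wmonos d \<longleftrightarrow> 0 \<notin># l \<and> 0 \<notin># m \<and> sum_mset l + sum_mset m = d"
  by (simp add: wmonos_def)

lemma minus_in_wmonos1: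
  assumes r: "r > 0" "r \<in># l" and w: "(l - {#r#}, m) \<in> wmonos d"
  shows "(l, m) \<in> wmonos (d + r)"
proof -
  obtain l' where l: "l = add_mset r l'" using r(2) by (metis multi_member_split)
  show ?thesis using w r unfolding wmonos_iff l by auto
qed

lemma minus_in_wmonos2:
  assumes r: "r > 0" "r \<in># m" and w: "(l, m - {#r#}) \<in> wmonos d"
  shows "(l, m) \<in> wmonos (d + r)"
proof -
  obtain m' where m: "m = add_mset r m'" using r(2) by (metis multi_member_split)
  show ?thesis using w r unfolding wmonos_iff m by auto
qed

lemma supp_mulA: "r > 0 \<Longrightarrow> supp d c \<Longrightarrow> supp (d + r) (mulA r c)"
  unfolding supp_def mulA_def using minus_in_wmonos1 by (metis prod.collapse)

lemma supp_mulB: "r > 0 \<Longrightarrow> supp d c \<Longrightarrow> supp (d + r) (mulB r c)"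
  unfolding supp_def mulB_def using minus_in_wmonos2 by (metis prod.collapse)

lemma Fv_mulA:
  assumes r: "r > 0" and s: "supp d c"
  shows "Fv (d + r) (mulA r c) a b = a r * Fv d c a b"
proof -
  define h where "h q = (add_mset r (fst q), snd q)" for q :: "nat multiset \<times> nat multiset"
  have inj: "inj_on h (wmonos d)" unfolding h_def by (rule inj_onI) (auto simp: prod_eq_iff)
  have sub: "h ` wmonos d \<subseteq> wmonos (d + r)"
    unfolding h_def wmonos_def using r by auto
  have z: "mulA r c p = 0" if "p \<in> wmonos (d + r) - h ` wmonos d" for p
  proof (cases "r \<in># fst p")
    case True
    have "p = h (fst p - {#r#}, snd p)" unfolding h_def using True by simp
    then have "(fst p - {#r#}, snd p) \<notin> wmonos d" using that by blast
    then show ?thesis using s unfolding supp_def mulA_def by simp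
  qed (simp add: mulA_def)
  have "Fv (d + r) (mulA r c) a b = (\<Sum>p\<in>h ` wmonos d. mulA r c p * (\<Prod>i\<in>#fst p. a i) * (\<Prod>j\<in>#snd p. b j))"
    unfolding Fv_def by (rule sum.mono_neutral_right[OF finite_wmonos sub]) (use z in auto)
  also have "\<dots> = (\<Sum>q\<in>wmonos d. mulA r c (h q) * (\<Prod>i\<in>#fst (h q). a i) * (\<Prod>j\<in>#snd (h q). b j))"
    by (rule sum.reindex[OF inj, unfolded comp_def])
  also have "\<dots> = (\<Sum>q\<in>wmonos d. a r * (c q * (\<Prod>i\<in>#fst q. a i) * (\<Prod>j\<in>#snd q. b j)))"
    by (intro sum.cong refl) (simp add: h_def mulA_def)
  also have "\<dots> = a r * Fv d c a b" unfolding Fv_def by (simp add: sum_distrib_left)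
  finally show ?thesis .
qed

lemma Fv_mulB:
  assumes r: "r > 0" and s: "supp d c"
  shows "Fv (d + r) (mulB r c) a b = b r * Fv d c a b"
proof -
  define h where "h q = (fst q, add_mset r (snd q))" for q :: "nat multiset \<times> nat multiset"
  have inj: "inj_on h (wmonos d)" unfolding h_def by (rule inj_onI) (auto simp: prod_eq_iff)
  have sub: "h ` wmonos d \<subseteq> wmonos (d + r)"
    unfolding h_def wmonos_def using r by auto
  have z: "mulB r c p = 0" if "p \<in> wmonos (d + r) - h ` wmonos d" for p
  proof (cases "r \<in># snd p")
    case True
    have "p = h (fst p, snd p - {#r#})" unfolding h_def using True by simp
    then have "(fst p, snd p - {#r#}) \<notin> wmonos d" using that by blast
    then show ?thesis using s unfolding supp_def mulB_def by simp
  qed (simp add: mulB_def)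
  have "Fv (d + r) (mulB r c) a b = (\<Sum>p\<in>h ` wmonos d. mulB r c p * (\<Prod>i\<in>#fst p. a i) * (\<Prod>j\<in>#snd p. b j))"
    unfolding Fv_def by (rule sum.mono_neutral_right[OF finite_wmonos sub]) (use z in auto)
  also have "\<dots> = (\<Sum>q\<in>wmonos d. mulB r c (h q) * (\<Prod>i\<in>#fst (h q). a i) * (\<Prod>j\<in>#snd (h q). b j))"
    by (rule sum.reindex[OF inj, unfolded comp_def])
  also have "\<dots> = (\<Sum>q\<in>wmonos d. b r * (c q * (\<Prod>i\<in>#fst q. a i) * (\<Prod>j\<in>#snd q. b j)))"
    by (intro sum.cong refl) (simp add: h_def mulB_def)
  also have "\<dots> = b r * Fv d c a b" unfolding Fv_def by (simp add: sum_distrib_left)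
  finally show ?thesis .
qed



fun U :: "nat list \<Rightarrow> (nat multiset \<times> nat multiset \<Rightarrow> complex)" where
  "U [] = (\<lambda>p. if p = ({#}, {#}) then 1 else 0)"
| "U (r # rs) = (if odd r then mulA r (U rs) else (\<lambda>p. mulB r (U rs) p - (\<i> ^ r / 2) * mulA r (U rs) p))"

definition ulin :: "nat \<Rightarrow> (nat \<Rightarrow> complex) \<Rightarrow> (nat \<Rightarrow> complex) \<Rightarrow> complex" where
  "ulin r a b = (if odd r then a r else b r - (\<i> ^ r / 2) * a r)"

lemma wmonos0: "wmonos 0 = {({#}, {#})}"
  unfolding wmonos_def by (auto, (metis multiset_nonemptyE)+)

lemma supp_lin: "supp d f \<Longrightarrow> supp d g \<Longrightarrow> supp d (\<lambda>p. f p - k * g p)"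
  unfolding supp_def by simp

lemma Fv_lin: "Fv n (\<lambda>p. f p - k * g p) a b = Fv n f a b - k * Fv n g a b"
  unfolding Fv_def by (simp add: sum_subtractf sum_distrib_left algebra_simps)

lemma supp_U: "0 \<notin> set rs \<Longrightarrow> supp (sum_list rs) (U rs)"
proof (induction rs)
  case Nil then show ?case by (simp add: supp_def wmonos0)
next
  case (Cons r rs)
  then have r: "r > 0" and IH: "supp (sum_list rs) (U rs)" by auto
  have e: "sum_list (r # rs) = sum_list rs + r" by simp
  show ?case
  proof (cases "odd r")
    case True then show ?thesis unfolding e using supp_mulA[OF r IH] by simp
  next
    case False
    then have u: "U (r # rs) = (\<lambda>p. mulB r (U rs) p - (\<i> ^ r / 2) * mulA r (U rs) p)" by simp
    show ?thesis unfolding e u by (rule supp_lin[OF supp_mulB[OF r IH] supp_mulA[OF r IH]])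
  qed
qed

lemma Fv_U: "0 \<notin> set rs \<Longrightarrow> Fv (sum_list rs) (U rs) a b = (\<Prod>r\<leftarrow>rs. ulin r a b)"
proof (induction rs)
  case Nil then show ?case by (simp add: Fv_def wmonos0)
next
  case (Cons r rs)
  then have r: "r > 0" and IH: "Fv (sum_list rs) (U rs) a b = (\<Prod>r\<leftarrow>rs. ulin r a b)" by auto
  have s: "supp (sum_list rs) (U rs)" using Cons.prems supp_U by simp
  have e: "sum_list (r # rs) = sum_list rs + r" by simp
  show ?case
  proof (cases "odd r")
    case True
    then show ?thesis unfolding e using Fv_mulA[OF r s] IH by (simp add: ulin_def)
  next
    case False
    then have u: "U (r # rs) = (\<lambda>p. mulB r (U rs) p - (\<i> ^ r / 2) * mulA r (U rs) p)" by simp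
    have "Fv (sum_list rs + r) (U (r # rs)) a b = b r * Fv (sum_list rs) (U rs) a b - (\<i> ^ r / 2) * (a r * Fv (sum_list rs) (U rs) a b)"
      unfolding u Fv_lin Fv_mulA[OF r s] Fv_mulB[OF r s] ..
    also have "\<dots> = ulin r a b * (\<Prod>r\<leftarrow>rs. ulin r a b)" unfolding IH ulin_def using False by (simp only: if_False) (simp add: algebra_simps)
    finally show ?thesis unfolding e by simp
  qed
qed

lemma U_Q: "0 \<notin> set rs \<Longrightarrow> U rs \<in> Qspace (sum_list rs)"
proof -
  assume rs: "0 \<notin> set rs"
  have inv: "ulin r (\<lambda>i. power_sum i X + (x ^ i + (- x) ^ i)) (\<lambda>j. power_sum j Z + (\<i> * x) ^ j)
      = ulin r (\<lambda>i. power_sum i X) (\<lambda>j. power_sum j Z)" for r X Z x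
  proof (cases "odd r")
    case True
    then show ?thesis by (simp add: ulin_def power_minus_odd)
  next
    case False
    then have "(- x) ^ r = x ^ r" by (simp add: power_minus_even)
    then show ?thesis using False by (simp add: ulin_def power_mult_distrib algebra_simps)
  qed
  show ?thesis
    unfolding Qspace_def using supp_U[OF rs]
    by (auto simp: supp_def evalQ_Fv Fv_U[OF rs] inv)
qed

lemma diff_single_eq: "r \<in># M \<Longrightarrow> (M - {#r#} = N) = (M = add_mset r N)"
  by (metis add_mset_remove_trivial insert_DiffM)

lemma U_pure: "pure p \<Longrightarrow> U rs p = (if p = (filter_mset odd (mset rs), filter_mset even (mset rs)) then 1 else 0)"
proof (induction rs arbitrary: p)
  case Nil then show ?case by simp
next
  case (Cons r rs p)
  obtain l m where p: "p = (l, m)" by (cases p)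
  have pl: "\<forall>i\<in>#l. odd i" and pm: "\<forall>j\<in>#m. even j" using Cons.prems p unfolding pure_def by auto
  show ?case
  proof (cases "odd r")
    case True
    have nm: "r \<notin># m" using pm True by auto
    show ?thesis
    proof (cases "r \<in># l")
      case rl: True
      have "pure (l - {#r#}, m)" using pl pm unfolding pure_def by (auto dest: in_diffD)
      then show ?thesis using Cons.IH[of "(l - {#r#}, m)"] rl True p by (simp add: mulA_def diff_single_eq)
    next
      case rl: False
      then show ?thesis using True p by (auto simp: mulA_def)
    qed
  next
    case False
    have nl: "r \<notin># l" using pl False by auto
    show ?thesis
    proof (cases "r \<in># m")
      case rm: True
      have "pure (l, m - {#r#})" using pl pm unfolding pure_def by (auto dest: in_diffD)
      then show ?thesis using Cons.IH[of "(l, m - {#r#})"] rm False p nl by (simp add: mulA_def mulB_def diff_single_eq)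
    next
      case rm: False
      then show ?thesis using False p nl by (auto simp: mulA_def mulB_def)
    qed
  qed
qed



interpretation QV: vector_space "(\<lambda>(a::complex) (f :: nat multiset \<times> nat multiset \<Rightarrow> complex). (\<lambda>p. a * f p))"
  by unfold_locales (auto simp: fun_eq_iff algebra_simps)

lemma sum_fun_apply: "(sum f A) x = (\<Sum>a\<in>A. f a x)"
  by (induction A rule: infinite_finite_induct) auto

definition Parts :: "nat \<Rightarrow> nat multiset set" where
  "Parts n = {m. 0 \<notin># m \<and> sum_mset m = n}"
definition mp :: "nat multiset \<Rightarrow> nat multiset \<times> nat multiset" where
  "mp m = (filter_mset odd m, filter_mset even m)"
definition Ub :: "nat multiset \<Rightarrow> (nat multiset \<times> nat multiset \<Rightarrow> complex)" where
  "Ub m = U (sorted_list_of_multiset m)"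

lemma finite_Parts: "finite (Parts n)"
proof -
  have "Parts n \<subseteq> fst ` wmonos n"
    unfolding Parts_def wmonos_def by (auto intro!: image_eqI[where x="(_, {#})"])
  then show ?thesis using finite_wmonos finite_surj by blast
qed

lemma filt_all: "\<forall>x\<in>#l. P x \<Longrightarrow> filter_mset P l = l"
  by (induction l) auto
lemma filt_none: "\<forall>x\<in>#l. \<not> P x \<Longrightarrow> filter_mset P l = {#}"
  by (induction l) auto

lemma pure_mp: "pure (mp m)" unfolding pure_def mp_def by auto

lemma mp_wmonos: "m \<in> Parts n \<Longrightarrow> mp m \<in> wmonos n"
  unfolding Parts_def mp_def wmonos_def
  by (auto simp flip: sum_mset.union)

lemma mp_eq: "mp m = mp m' \<longleftrightarrow> m = m'"
proof
  assume "mp m = mp m'"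
  then have "filter_mset odd m = filter_mset odd m'" "filter_mset even m = filter_mset even m'"
    unfolding mp_def by auto
  then show "m = m'" by (metis multiset_partition)
qed simp

lemma Ub_mp: "Ub m (mp m') = (if m' = m then 1 else 0)"
  unfolding Ub_def using U_pure[OF pure_mp[of m'], where rs="sorted_list_of_multiset m"]
  by (simp add: mp_eq[symmetric] mp_def[symmetric])

lemma Ub_Q: "m \<in> Parts n \<Longrightarrow> Ub m \<in> Qspace n"
  unfolding Ub_def Parts_def using U_Q[of "sorted_list_of_multiset m"]
  by (auto simp flip: sum_mset_sum_list)

lemma inj_Ub: "inj_on Ub (Parts n)"
proof (rule inj_onI)
  fix m m' assume "Ub m = Ub m'"
  then have "Ub m (mp m) = Ub m' (mp m)" by simp
  then show "m = m'" by (simp add: Ub_mp split: if_splits)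
qed

lemma evalQ_add: "evalQ n (f + g) X Z = evalQ n f X Z + evalQ n g X Z"
  unfolding evalQ_def by (simp add: sum.distrib algebra_simps)

lemma evalQ_scale: "evalQ n (\<lambda>p. a * f p) X Z = a * evalQ n f X Z"
  unfolding evalQ_def by (simp add: sum_distrib_left algebra_simps)

lemma evalQ_zero: "evalQ n 0 X Z = 0"
  unfolding evalQ_def by simp

lemma subspace_Q: "QV.subspace (Qspace n)"
  unfolding QV.subspace_def Qspace_def
  by (auto simp: evalQ_add evalQ_scale evalQ_zero)

lemma indep_B: "QV.independent (Ub ` Parts n)"
  unfolding QV.dependent_explicit
proof clarify
  fix t u v assume t: "finite t" "t \<subseteq> Ub ` Parts n"
    and s: "(\<Sum>v\<in>t. (\<lambda>p. u v * v p)) = 0" and v: "v \<in> t" "u v \<noteq> 0"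
  obtain m where m: "m \<in> Parts n" "v = Ub m" using v t by auto
  have "0 = (\<Sum>w\<in>t. (\<lambda>p. u w * w p)) (mp m)" using s by simp
  also have "\<dots> = (\<Sum>w\<in>t. u w * w (mp m))" by (simp add: sum_fun_apply)
  also have "\<dots> = (\<Sum>w\<in>t. if w = v then u w else 0)"
  proof (intro sum.cong refl)
    fix w assume w: "w \<in> t"
    then obtain m' where m': "m' \<in> Parts n" "w = Ub m'" using t by auto
    have "m' = m \<longleftrightarrow> w = v" using m m' inj_Ub[of n] by (auto dest: inj_onD)
    then show "u w * w (mp m) = (if w = v then u w else 0)"
      using m' by (auto simp: Ub_mp)
  qed
  also have "\<dots> = u v" using t v by simp
  finally show False using v by simp
qed

lemma span_B: "QV.span (Ub ` Parts n) = Qspace n"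
proof (rule QV.span_subspace)
  show "Ub ` Parts n \<subseteq> Qspace n" using Ub_Q by auto
  show "QV.subspace (Qspace n)" by (rule subspace_Q)
  show "Qspace n \<subseteq> QV.span (Ub ` Parts n)"
  proof
    fix c assume c: "c \<in> Qspace n"
    define S where "S = (\<Sum>m\<in>Parts n. (\<lambda>p. c (mp m) * Ub m p))"
    have SQ: "S \<in> Qspace n" unfolding S_def
      by (rule QV.subspace_sum[OF subspace_Q]) (use Ub_Q subspace_Q in \<open>auto simp: QV.subspace_def\<close>)
    have cS: "c - S \<in> Qspace n" by (rule QV.subspace_diff[OF subspace_Q c SQ])
    moreover have pz: "\<forall>p\<in>wmonos n. pure p \<longrightarrow> (c - S) p = 0"
    proof clarify
      fix p assume p: "p \<in> wmonos n" "pure p"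
      define m0 where "m0 = fst p + snd p"
      have pm: "p = mp m0"
        using p(2) unfolding pure_def mp_def m0_def
        by (cases p) (auto simp: filt_all filt_none)
      have m0P: "m0 \<in> Parts n" using p(1) unfolding m0_def Parts_def wmonos_def by (cases p) auto
      have "S p = (\<Sum>m\<in>Parts n. c (mp m) * Ub m p)" unfolding S_def by (simp add: sum_fun_apply)
      also have "\<dots> = (\<Sum>m\<in>Parts n. if m = m0 then c (mp m) else 0)"
        by (intro sum.cong refl) (simp add: pm Ub_mp)
      also have "\<dots> = c p" using m0P finite_Parts pm by simp
      finally show "(c - S) p = 0" by simp
    qed
    have "c - S = 0"
    proof (rule ext)
      fix p show "(c - S) p = 0 p" using key[OF cS pz, of p] by simp
    qed
    then have "c = S" by simp
    moreover have "S \<in> QV.span (Ub ` Parts n)" unfolding S_def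
    proof (rule QV.span_sum)
      fix m assume "m \<in> Parts n"
      then show "(\<lambda>p. c (mp m) * Ub m p) \<in> QV.span (Ub ` Parts n)"
        by (intro QV.span_scale[where c="c (mp m)" and x="Ub m"] QV.span_base) auto
    qed
    ultimately show "c \<in> QV.span (Ub ` Parts n)" by simp
  qed
qed

lemma dimQ_eq: "dimQ n = card (Parts n)"
proof -
  have "dimQ n = QV.dim (QV.span (Ub ` Parts n))" unfolding dimQ_def span_B ..
  also have "\<dots> = card (Ub ` Parts n)" using QV.dim_span QV.dim_eq_card_independent[OF indep_B] by simp
  also have "\<dots> = card (Parts n)" using inj_Ub card_image by blast
  finally show ?thesis .
qed



definition PK :: "nat \<Rightarrow> nat \<Rightarrow> nat" where
  "PK K n = card {m\<in>Parts n. \<forall>x\<in>#m. x \<le> K}"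

lemma PK_0: "PK 0 n = (if n = 0 then 1 else 0)"
proof -
  have "{m\<in>Parts n. \<forall>x\<in>#m. x \<le> 0} = (if n = 0 then {{#}} else {})"
  proof -
    have e: "m = {#}" if "\<forall>x\<in>#m. x \<le> 0" "0 \<notin># m" for m :: "nat multiset"
      using that by (metis le_zero_eq multiset_nonemptyE)
    show ?thesis
    proof (cases "n = 0")
      case True then show ?thesis unfolding Parts_def using e by auto
    next
      case False
      have "m \<notin> Parts n" if "\<forall>x\<in>#m. x \<le> 0" for m
      proof
        assume "m \<in> Parts n"
        then have "m = {#}" "sum_mset m = n" using e that unfolding Parts_def by auto
        then show False using False by simp
      qed
      then have "{m\<in>Parts n. \<forall>x\<in>#m. x \<le> 0} = {}"
        by (metis (mono_tags, lifting) empty_Collect_eq)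
      then show ?thesis using False by simp
    qed
  qed
  then show ?thesis unfolding PK_def by simp
qed

lemma PK_le: "PK K n \<le> card (Parts n)"
  unfolding PK_def by (rule card_mono[OF finite_Parts]) auto

lemma PK_big: "n \<le> K \<Longrightarrow> PK K n = card (Parts n)"
  unfolding PK_def Parts_def
  by (rule arg_cong[where f=card]) (auto dest: mem_le_sum_mset)

lemma PK_Suc: "PK (Suc K) n = PK K n + (if Suc K \<le> n then PK (Suc K) (n - Suc K) else 0)"
proof -
  define A1 where "A1 = {m\<in>Parts n. \<forall>x\<in>#m. x \<le> K}"
  define A2 where "A2 = {m\<in>Parts n. (\<forall>x\<in>#m. x \<le> Suc K) \<and> Suc K \<in># m}"
  define C where "C = {m\<in>Parts (n - Suc K). \<forall>x\<in>#m. x \<le> Suc K}"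
  have split: "{m\<in>Parts n. \<forall>x\<in>#m. x \<le> Suc K} = A1 \<union> A2"
    unfolding A1_def A2_def by (auto simp: le_Suc_eq)
  have disj: "A1 \<inter> A2 = {}" unfolding A1_def A2_def by auto
  have fin: "finite A1" "finite A2" unfolding A1_def A2_def using finite_Parts by auto
  have c2: "card A2 = (if Suc K \<le> n then card C else 0)"
  proof (cases "Suc K \<le> n")
    case True
    have "A2 = add_mset (Suc K) ` C"
    proof
      show "add_mset (Suc K) ` C \<subseteq> A2" unfolding A2_def C_def Parts_def using True by auto
      show "A2 \<subseteq> add_mset (Suc K) ` C"
      proof
        fix m assume m: "m \<in> A2"
        then have mi: "Suc K \<in># m" unfolding A2_def by auto
        then obtain m' where m': "m = add_mset (Suc K) m'" by (metis multi_member_split)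
        have "m' \<in> C" using m unfolding m' A2_def C_def Parts_def by auto
        then show "m \<in> add_mset (Suc K) ` C" using m' by blast
      qed
    qed
    then have "card A2 = card C" by (simp add: card_image inj_on_def)
    then show ?thesis using True by simp
  next
    case False
    have "A2 = {}" unfolding A2_def Parts_def using False by (auto dest: mem_le_sum_mset)
    then show ?thesis using False by simp
  qed
  show ?thesis unfolding PK_def split card_Un_disjoint[OF fin disj] c2
    by (simp add: A1_def C_def)
qed

lemma PK_rec_term:
  fixes x :: "'a::comm_ring_1"
  shows "of_nat (PK (Suc K) n) * x ^ n = of_nat (PK K n) * x ^ n +
    (if Suc K \<le> n then x ^ Suc K * (of_nat (PK (Suc K) (n - Suc K)) * x ^ (n - Suc K)) else 0)"
proof (cases "Suc K \<le> n")
  case True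
  have e: "x ^ n = x ^ Suc K * x ^ (n - Suc K)" using True by (metis le_add_diff_inverse power_add)
  have "of_nat (PK (Suc K) n) * x ^ n = of_nat (PK K n) * x ^ n + of_nat (PK (Suc K) (n - Suc K)) * x ^ n"
    using True by (simp add: PK_Suc distrib_right)
  also have "of_nat (PK (Suc K) (n - Suc K)) * x ^ n = x ^ Suc K * (of_nat (PK (Suc K) (n - Suc K)) * x ^ (n - Suc K))"
    by (subst e) (simp only: mult_ac)
  finally show ?thesis using True by simp
next
  case False then show ?thesis by (simp add: PK_Suc)
qed

lemma sum_shift_if: "(\<Sum>n<(N::nat). if s \<le> n then f (n - s) else 0) = (\<Sum>n<N - s. f n)"
proof (induction N)
  case (Suc N)
  show ?case
  proof (cases "s \<le> N")
    case True
    then have "Suc N - s = Suc (N - s)" by simp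
    then show ?thesis using Suc True by simp
  next
    case False
    then have "Suc N - s = N - s" by simp
    then show ?thesis using Suc False by simp
  qed
qed simp

lemma GK:
  fixes z :: "'a::{real_normed_field,banach}"
  assumes z: "norm z < 1"
  shows "summable (\<lambda>n. real (PK K n) * norm z ^ n) \<and> (\<lambda>n. of_nat (PK K n) * z ^ n) sums (\<Prod>k<K. 1 / (1 - z ^ Suc k))"
  using z
proof (induction K arbitrary: z)
  case 0
  have e: "(\<lambda>n. of_nat (PK 0 n) * z ^ n) = (\<lambda>n. if n = 0 then 1 else 0)" for z :: 'a
    by (auto simp: PK_0)
  have e2: "(\<lambda>n. real (PK 0 n) * norm z ^ n) = (\<lambda>n. if n = 0 then 1 else 0)"
    by (auto simp: PK_0)
  show ?case unfolding e e2 using sums_single[of 0 "\<lambda>_. 1::'a"] sums_single[of 0 "\<lambda>_. 1::real"]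
    by (auto simp: sums_iff)
next
  case (Suc K z)
  define r where "r = norm z"
  define s where "s = Suc K"
  have r: "0 \<le> r" "r < 1" using Suc.prems r_def by auto
  have rs: "r ^ s < 1"
  proof -
    have "r ^ K \<le> 1" using r by (simp add: power_le_one)
    then have "r * r ^ K \<le> r" using r by (simp add: mult_left_le)
    then show ?thesis using r s_def by simp
  qed
  have IHr: "summable (\<lambda>n. real (PK K n) * r ^ n)" using Suc.IH[of z] Suc.prems r_def by simp
  define A where "A = suminf (\<lambda>n. real (PK K n) * r ^ n)"
  have sumb: "summable (\<lambda>n. real (PK s n) * r ^ n)"
  proof (rule summableI_nonneg_bounded)
    show "0 \<le> real (PK s n) * r ^ n" for n using r by simp
    fix N
    define T where "T = (\<Sum>n<N. real (PK s n) * r ^ n)"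
    have T0: "(\<Sum>n<N - s. real (PK s n) * r ^ n) \<le> T"
      unfolding T_def by (rule sum_mono2) (use r in auto)
    have "T = (\<Sum>n<N. real (PK K n) * r ^ n) + (\<Sum>n<N. if s \<le> n then r ^ s * (real (PK s (n - s)) * r ^ (n - s)) else 0)"
      unfolding T_def s_def sum.distrib[symmetric]
      by (intro sum.cong refl) (rule PK_rec_term)
    also have "\<dots> = (\<Sum>n<N. real (PK K n) * r ^ n) + r ^ s * (\<Sum>n<N - s. real (PK s n) * r ^ n)"
      using sum_shift_if[of s "\<lambda>m. r ^ s * (real (PK s m) * r ^ m)" N] by (simp add: sum_distrib_left)
    also have "\<dots> \<le> A + r ^ s * T"
    proof (rule add_mono)
      show "(\<Sum>n<N. real (PK K n) * r ^ n) \<le> A" unfolding A_def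
        by (rule sum_le_suminf[OF IHr]) (use r in auto)
      show "r ^ s * (\<Sum>n<N - s. real (PK s n) * r ^ n) \<le> r ^ s * T"
        by (rule mult_left_mono[OF T0]) (use r in auto)
    qed
    finally have "T * (1 - r ^ s) \<le> A" by (simp add: algebra_simps)
    then show "T \<le> A / (1 - r ^ s)" using rs by (simp add: field_simps)
  qed
  have sumb': "summable (\<lambda>n. of_nat (PK s n) * z ^ n)"
    by (rule summable_norm_cancel) (use sumb r_def in \<open>simp add: norm_mult norm_power\<close>)
  define B where "B = suminf (\<lambda>n. of_nat (PK s n) * z ^ n)"
  define Ap where "Ap = (\<Prod>k<K. 1 / (1 - z ^ Suc k))"
  have IHs: "(\<lambda>n. of_nat (PK K n) * z ^ n) sums Ap" using Suc.IH[of z] Suc.prems Ap_def by simp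
  define h where "h n = (if s \<le> n then z ^ s * (of_nat (PK s (n - s)) * z ^ (n - s)) else 0)" for n
  have hs: "h sums (z ^ s * B)"
  proof -
    have "(\<lambda>i. h (i + s)) sums (z ^ s * B)"
      unfolding h_def B_def using sums_mult[OF summable_sums[OF sumb'], of "z ^ s"] by simp
    then have "h sums (z ^ s * B + (\<Sum>i<s. h i))" by (simp only: sums_iff_shift)
    moreover have "(\<Sum>i<s. h i) = 0" unfolding h_def by simp
    ultimately show ?thesis by simp
  qed
  have "(\<lambda>n. of_nat (PK s n) * z ^ n) = (\<lambda>n. of_nat (PK K n) * z ^ n + h n)"
    unfolding h_def s_def by (rule ext) (rule PK_rec_term)
  then have "(\<lambda>n. of_nat (PK s n) * z ^ n) sums (Ap + z ^ s * B)" using sums_add[OF IHs hs] by simp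
  then have BB: "B = Ap + z ^ s * B" unfolding B_def by (simp add: sums_iff)
  have zs: "z ^ s \<noteq> 1"
  proof
    assume "z ^ s = 1"
    then have "norm (z ^ s) = 1" by simp
    then show False using rs r_def by (simp add: norm_power)
  qed
  then have "1 - z ^ s \<noteq> 0" by simp
  then have "B = Ap / (1 - z ^ s)" using BB by (simp add: field_simps)
  also have "\<dots> = (\<Prod>k<Suc K. 1 / (1 - z ^ Suc k))" unfolding Ap_def s_def by simp
  finally have BB2: "B = (\<Prod>k<Suc K. 1 / (1 - z ^ Suc k))" .
  have "(\<lambda>n. of_nat (PK s n) * z ^ n) sums (\<Prod>k<Suc K. 1 / (1 - z ^ Suc k))"
    using summable_sums[OF sumb', folded B_def] unfolding BB2 .
  then show ?case using sumb r_def s_def by simp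
qed



theorem theorem5:
  fixes q :: complex
  assumes "norm q < 1"
  shows "(\<lambda>n. of_nat (dimQ n) * q ^ n) sums (\<Prod>k. 1 / (1 - q ^ Suc k))"
proof -
  define r where "r = norm q"
  have r: "0 \<le> r" "r < 1" using assms r_def by auto
  have rpow: "r ^ Suc k < 1" for k
  proof -
    have "r ^ k \<le> 1" using r by (simp add: power_le_one)
    then have "r * r ^ k \<le> r" using r by (simp add: mult_left_le)
    then show ?thesis using r by simp
  qed
  have rpow2: "r * r ^ k \<noteq> 1" for k using rpow[of k] by simp
  define P where "P n = card (Parts n)" for n
  define f where "f k = 1 / (1 - r ^ Suc k)" for k
  have sumgr: "summable (\<lambda>k. r ^ Suc k)" using r by (simp add: summable_mult summable_geometric)
  have cpf: "convergent_prod f"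
  proof -
    have "convergent_prod (\<lambda>k. 1 + (- (r ^ Suc k)))"
      by (rule summable_imp_convergent_prod_real) (use sumgr r rpow2 in \<open>auto simp: abs_mult\<close>)
    then have "convergent_prod (\<lambda>k. inverse (1 + (- (r ^ Suc k))))" by simp
    then show ?thesis unfolding f_def by (simp add: inverse_eq_divide)
  qed
  have fge: "1 \<le> f k" for k
  proof -
    have "0 < 1 - r ^ Suc k" "1 - r ^ Suc k \<le> 1" using rpow r by auto
    then show ?thesis unfolding f_def by simp
  qed
  have bound: "(\<Sum>n<N. real (P n) * r ^ n) \<le> prodinf f" for N
  proof -
    have G: "summable (\<lambda>n. real (PK N n) * norm r ^ n) \<and> (\<lambda>n. of_nat (PK N n) * r ^ n) sums (\<Prod>k<N. 1 / (1 - r ^ Suc k))"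
      using GK[of r N] r by simp
    have "(\<Sum>n<N. real (P n) * r ^ n) = (\<Sum>n<N. real (PK N n) * r ^ n)"
      by (intro sum.cong refl) (simp add: P_def PK_big)
    also have "\<dots> \<le> suminf (\<lambda>n. real (PK N n) * r ^ n)"
      by (rule sum_le_suminf) (use G r in auto)
    also have "\<dots> = prod f {..<N}" using G unfolding f_def by (simp add: sums_iff)
    also have "\<dots> \<le> prodinf f"
      by (rule prod_le_prodinf[OF convergent_prod_has_prod[OF cpf]]) (use fge in \<open>auto intro: order_trans[OF zero_le_one]\<close>)
    finally show ?thesis .
  qed
  have sumP: "summable (\<lambda>n. real (P n) * r ^ n)"
    by (rule summableI_nonneg_bounded[OF _ bound]) (use r in auto)
  define a where "a k n = of_nat (PK n k) * q ^ k" for k n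
  define b where "b k = of_nat (P k) * q ^ k" for k
  have T: "eventually (\<lambda>n. summable (\<lambda>k. norm (a k n))) sequentially \<and>
           summable (\<lambda>n. norm (b n)) \<and>
           ((\<lambda>n. suminf (\<lambda>k. a k n)) \<longlongrightarrow> suminf b) sequentially"
  proof (rule tannerys_theorem[where M="\<lambda>k. real (P k) * r ^ k"])
    show "((\<lambda>n. a k n) \<longlongrightarrow> b k) sequentially" for k
    proof (rule tendsto_eventually)
      show "eventually (\<lambda>n. a k n = b k) sequentially"
        using eventually_ge_at_top[of k] by eventually_elim (simp add: a_def b_def P_def PK_big)
    qed
    show "eventually (\<lambda>(k, n). norm (a k n) \<le> real (P k) * r ^ k) (at_top \<times>\<^sub>F sequentially)"
    proof (rule always_eventually, clarify)
      fix k n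
      have "real (PK n k) \<le> real (P k)" unfolding P_def using PK_le by simp
      then show "norm (a k n) \<le> real (P k) * r ^ k"
        unfolding a_def r_def by (simp add: norm_mult norm_power mult_right_mono)
    qed
  qed (use sumP in auto)
  have GKq: "suminf (\<lambda>k. a k n) = (\<Prod>k<n. 1 / (1 - q ^ Suc k))" for n
    using GK[of q n] assms unfolding a_def by (simp add: sums_iff)
  have L1: "(\<lambda>n. \<Prod>k<Suc n. 1 / (1 - q ^ Suc k)) \<longlonglongrightarrow> suminf b"
    using LIMSEQ_Suc[OF T[THEN conjunct2, THEN conjunct2]] unfolding GKq .
  have cpg: "convergent_prod (\<lambda>k. 1 / (1 - q ^ Suc k))"
  proof -
    have qn: "q ^ Suc k \<noteq> 1" for k
    proof
      assume "q ^ Suc k = 1"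
      then have "norm (q ^ Suc k) = 1" by simp
      moreover have "norm (q ^ Suc k) = r ^ Suc k" unfolding r_def by (rule norm_power)
      ultimately show False using rpow[of k] by simp
    qed
    have "convergent_prod (\<lambda>k. 1 + (- (q ^ Suc k)))"
    proof (rule summable_imp_convergent_prod_complex)
      have "(\<lambda>k. norm (- (q ^ Suc k))) = (\<lambda>k. r ^ Suc k)" unfolding r_def norm_minus_cancel by (rule ext, rule norm_power)
      then show "summable (\<lambda>k. norm (- (q ^ Suc k)))" using sumgr by simp
      show "- (q ^ Suc k) \<noteq> - 1" for k using qn[of k] by simp
    qed
    then have "convergent_prod (\<lambda>k. inverse (1 + (- (q ^ Suc k))))" by simp
    then show ?thesis by (simp add: inverse_eq_divide)
  qed
  have L2: "(\<lambda>n. \<Prod>k<Suc n. 1 / (1 - q ^ Suc k)) \<longlonglongrightarrow> (\<Prod>k. 1 / (1 - q ^ Suc k))"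
    using convergent_prod_LIMSEQ[OF cpg] by (simp add: lessThan_Suc_atMost)
  have eq: "(\<Prod>k. 1 / (1 - q ^ Suc k)) = suminf b" using LIMSEQ_unique[OF L2 L1] .
  have sb: "summable b" using T by (blast intro: summable_norm_cancel)
  have "(\<lambda>n. of_nat (dimQ n) * q ^ n) = b" unfolding b_def P_def by (simp add: dimQ_eq)
  then show ?thesis using summable_sums[OF sb] eq by simp
qed

end
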